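(* A (Tychonoff) space $X$ is a finite $C$-space if and only if for any sequence $\{Q_n\}$ of finite-dimensional cubes and closed nowhere dense sets $A_n\subset Q_n$, every sequence of continuous maps $f_n\colon X\to Q_n$ is finitely removable from $A=\prod_{n=1}^\infty A_n$, i.e. for every sequence of positive reals $\{\epsilon_n\}$ there exist $m$ and continuous maps $g_n\colon X\to Q_n$, $n=1,\dots,m$, with $d_n(f_n(x),g_n(x))\le\epsilon_n$ for all $x\in X$, $n\le m$, and $(g_1(x),\dots,g_m(x))\notin\prod_{n=1}^m A_n$ for all $x\in X$.
   Context: A set is functionally open if it is a cozero set. $X$ is a finite $C$-space if for every sequence $\{\omega_n\}$ of finite covers of $X$ by functionally open sets there exist $k$ and finite families $\gamma_1,\dots,\gamma_k$ of pairwise disjoint functionally open sets such that each $\gamma_n$ refines $\omega_n$ and $\bigcup_{n=1}^k\gamma_n$ covers $X$. A finite-dimensional cube is $Q_n=[a_n,b_n]^{k(n)}\subset\mathbb R^{k(n)}$, with $d_n$ the metric induced by a norm on $\mathbb R^{k(n)}$. *)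

theory Defs
  imports "HOL-Analysis.Analysis" "HOL-Library.Disjoint_Sets"
begin

definition tychonoff_space :: "'a topology \<Rightarrow> bool" where
  "tychonoff_space X \<longleftrightarrow> completely_regular_space X \<and> Hausdorff_space X"

definition functionally_open :: "'a topology \<Rightarrow> 'a set \<Rightarrow> bool" where
  "functionally_open X U \<longleftrightarrow>
     (\<exists>f. continuous_map X euclideanreal f \<and> U = {x \<in> topspace X. f x \<noteq> 0})"

definition refines :: "'a set set \<Rightarrow> 'a set set \<Rightarrow> bool" where
  "refines \<gamma> \<omega> \<longleftrightarrow> (\<forall>U\<in>\<gamma>. \<exists>V\<in>\<omega>. U \<subseteq> V)"

text \<open>Finite C-space (sequences indexed from 0).\<close>
definition finite_C_space :: "'a topology \<Rightarrow> bool" where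
  "finite_C_space X \<longleftrightarrow>
    (\<forall>\<omega> :: nat \<Rightarrow> 'a set set.
       (\<forall>n. finite (\<omega> n) \<and> (\<forall>U\<in>\<omega> n. functionally_open X U) \<and> \<Union>(\<omega> n) = topspace X) \<longrightarrow>
       (\<exists>k. \<exists>\<gamma> :: nat \<Rightarrow> 'a set set.
          (\<forall>n<k. finite (\<gamma> n) \<and> (\<forall>U\<in>\<gamma> n. functionally_open X U) \<and>
                 pairwise disjnt (\<gamma> n) \<and> refines (\<gamma> n) (\<omega> n)) \<and>
          topspace X \<subseteq> (\<Union>n<k. \<Union>(\<gamma> n))))"

text \<open>R^k is represented as the functions nat \<Rightarrow> real vanishing from index k on,
  with the topology Euclidean_space k from HOL-Analysis.\<close>
definition Rk :: "nat \<Rightarrow> (nat \<Rightarrow> real) set" where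
  "Rk k = {x. \<forall>i\<ge>k. x i = 0}"

definition cube :: "real \<Rightarrow> real \<Rightarrow> nat \<Rightarrow> (nat \<Rightarrow> real) set" where
  "cube a b k = {x \<in> Rk k. \<forall>i<k. a \<le> x i \<and> x i \<le> b}"

definition is_norm_on :: "nat \<Rightarrow> ((nat \<Rightarrow> real) \<Rightarrow> real) \<Rightarrow> bool" where
  "is_norm_on k N \<longleftrightarrow>
     (\<forall>x\<in>Rk k. 0 \<le> N x \<and> (N x = 0 \<longleftrightarrow> (\<forall>i. x i = 0))) \<and>
     (\<forall>x\<in>Rk k. \<forall>c. N (\<lambda>i. c * x i) = \<bar>c\<bar> * N x) \<and>
     (\<forall>x\<in>Rk k. \<forall>y\<in>Rk k. N (\<lambda>i. x i + y i) \<le> N x + N y)"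

text \<open>The sequence f is finitely removable from the product of the A n, where
  the n-th cube carries the metric d_n(x,y) = N n (x - y).\<close>
definition finitely_removable ::
  "'a topology \<Rightarrow> (nat \<Rightarrow> (nat \<Rightarrow> real) set) \<Rightarrow> (nat \<Rightarrow> nat)
    \<Rightarrow> (nat \<Rightarrow> (nat \<Rightarrow> real) \<Rightarrow> real) \<Rightarrow> (nat \<Rightarrow> (nat \<Rightarrow> real) set)
    \<Rightarrow> (nat \<Rightarrow> 'a \<Rightarrow> nat \<Rightarrow> real) \<Rightarrow> bool" where
  "finitely_removable X Q k N A f \<longleftrightarrow>
    (\<forall>\<epsilon> :: nat \<Rightarrow> real. (\<forall>n. 0 < \<epsilon> n) \<longrightarrow>
       (\<exists>m. \<exists>g :: nat \<Rightarrow> 'a \<Rightarrow> nat \<Rightarrow> real.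
          (\<forall>n<m. continuous_map X (subtopology (Euclidean_space (k n)) (Q n)) (g n) \<and>
                 (\<forall>x\<in>topspace X. N n (\<lambda>i. f n x i - g n x i) \<le> \<epsilon> n)) \<and>
          (\<forall>x\<in>topspace X. \<exists>n<m. g n x \<notin> A n)))"

end

theory Submission
  imports Defs
begin


lemma sub_eu: "Q \<subseteq> Rk k \<Longrightarrow> subtopology (Euclidean_space k) Q = top_of_set Q"
  unfolding Euclidean_space_def Rk_def
  by (simp add: euclidean_product_topology subtopology_subtopology Int_absorb1)

lemma cm_top_of_set:
  "continuous_map X (top_of_set (Q::(nat\<Rightarrow>real) set)) g \<longleftrightarrow>
    (\<forall>i. continuous_map X euclideanreal (\<lambda>x. g x i)) \<and> g ` topspace X \<subseteq> Q"
  by (simp add: continuous_map_in_subtopology image_subset_iff Pi_iff flip: euclidean_product_topology continuous_map_componentwise_UNIV)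

lemma cube_Rk: "cube a b k \<subseteq> Rk k" by (auto simp: cube_def)

lemma fo_intro: "continuous_map X euclideanreal h \<Longrightarrow> V = {x \<in> topspace X. h x \<noteq> 0} \<Longrightarrow> functionally_open X V"
  unfolding functionally_open_def by blast

lemma compact_cube: "compact (cube a b k)"
proof -
  have "cube a b k = PiE UNIV (\<lambda>i. if i < k then {a..b} else {0})"
  proof (intro set_eqI iffI)
    fix x assume "x \<in> cube a b k"
    then show "x \<in> PiE UNIV (\<lambda>i. if i < k then {a..b} else {0})"
      by (simp add: cube_def Rk_def PiE_iff)
  next
    fix x assume x: "x \<in> PiE UNIV (\<lambda>i. if i < k then {a..b} else {0})"
    have h: "x i \<in> (if i < k then {a..b} else {0})" for i using x by (simp add: PiE_iff)
    have h1: "\<forall>i\<ge>k. x i = 0"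
    proof (intro allI impI)
      fix i assume "k \<le> i" then show "x i = 0" using h[of i] by simp
    qed
    have h2: "\<forall>i<k. a \<le> x i \<and> x i \<le> b"
    proof (intro allI impI)
      fix i assume "i < k" then show "a \<le> x i \<and> x i \<le> b" using h[of i] by simp
    qed
    show "x \<in> cube a b k" unfolding cube_def Rk_def using h1 h2 by blast
  qed
  moreover have "compactin (product_topology (\<lambda>i. euclideanreal) UNIV) (PiE UNIV (\<lambda>i. if i < k then {a..b} else {0::real}))"
    by (simp add: compactin_PiE)
  ultimately show ?thesis by (simp add: euclidean_product_topology compactin_euclidean_iff)
qed

definition L1 :: "nat \<Rightarrow> (nat\<Rightarrow>real) \<Rightarrow> real" where "L1 k v = (\<Sum>i<k. \<bar>v i\<bar>)"

definition ee :: "nat \<Rightarrow> nat \<Rightarrow> real" where "ee m = (\<lambda>j. if j = m then 1 else 0)"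

lemma norm_zero: "is_norm_on k N \<Longrightarrow> N (\<lambda>i. 0) = 0"
  unfolding is_norm_on_def Rk_def by auto

lemma norm_bound_aux:
  assumes "is_norm_on k N"
  shows "m \<le> k \<Longrightarrow> (\<forall>i\<ge>m. v i = 0) \<Longrightarrow> N v \<le> (\<Sum>i<m. \<bar>v i\<bar> * N (ee i))"
proof (induction m arbitrary: v)
  case 0
  then have "v = (\<lambda>i. 0)" by auto
  then show ?case using norm_zero[OF assms] by simp
next
  case (Suc m)
  define w where "w = v(m := 0)"
  have w0: "\<forall>i\<ge>m. w i = 0" using Suc.prems by (auto simp: w_def)
  have IH: "N w \<le> (\<Sum>i<m. \<bar>w i\<bar> * N (ee i))" using Suc w0 by auto
  have sw: "(\<Sum>i<m. \<bar>w i\<bar> * N (ee i)) = (\<Sum>i<m. \<bar>v i\<bar> * N (ee i))"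
    by (rule sum.cong) (auto simp: w_def)
  have veq: "v = (\<lambda>i. w i + (\<lambda>i. v m * ee m i) i)"
    by (auto simp: w_def ee_def)
  have wR: "w \<in> Rk k" using w0 Suc.prems by (auto simp: Rk_def)
  have eR: "ee m \<in> Rk k" using Suc.prems by (auto simp: Rk_def ee_def)
  have eR2: "(\<lambda>i. v m * ee m i) \<in> Rk k" using Suc.prems by (auto simp: Rk_def ee_def)
  have tri: "\<forall>x\<in>Rk k. \<forall>y\<in>Rk k. N (\<lambda>i. x i + y i) \<le> N x + N y"
    and hom: "\<forall>x\<in>Rk k. \<forall>c. N (\<lambda>i. c * x i) = \<bar>c\<bar> * N x"
    using assms unfolding is_norm_on_def by blast+
  have "N v \<le> N w + N (\<lambda>i. v m * ee m i)"
    using tri[rule_format, OF wR eR2] by (subst veq) simp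
  also have "N (\<lambda>i. v m * ee m i) = \<bar>v m\<bar> * N (ee m)"
    using hom[rule_format, OF eR] by blast
  finally show ?case using IH sw by simp
qed

lemma norm_L1:
  assumes "is_norm_on k N"
  shows "\<exists>C>0. \<forall>v\<in>Rk k. N v \<le> C * L1 k v"
proof -
  define C where "C = (\<Sum>i<k. N (ee i)) + 1"
  have eR: "\<And>i. i < k \<Longrightarrow> ee i \<in> Rk k" by (auto simp: Rk_def ee_def)
  have Nnn: "\<And>i. i < k \<Longrightarrow> N (ee i) \<ge> 0" using assms eR unfolding is_norm_on_def by blast
  have Cge: "\<And>i. i < k \<Longrightarrow> N (ee i) \<le> C"
  proof -
    fix i assume "i < k"
    have "N (ee i) \<le> (\<Sum>i<k. N (ee i))"
      using \<open>i<k\<close> Nnn by (intro member_le_sum) auto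
    then show "N (ee i) \<le> C" by (simp add: C_def)
  qed
  have "0 \<le> (\<Sum>i<k. N (ee i))" by (rule sum_nonneg) (use Nnn in auto)
  then have Cpos: "C > 0" by (simp add: C_def)
  have "N v \<le> C * L1 k v" if "v \<in> Rk k" for v
  proof -
    have "N v \<le> (\<Sum>i<k. \<bar>v i\<bar> * N (ee i))"
      using norm_bound_aux[OF assms, of k v] that by (auto simp: Rk_def)
    also have "\<dots> \<le> (\<Sum>i<k. \<bar>v i\<bar> * C)"
      by (intro sum_mono mult_left_mono Cge) auto
    also have "\<dots> = C * L1 k v" by (simp add: L1_def sum_distrib_left mult.commute)
    finally show ?thesis .
  qed
  then show ?thesis using Cpos by blast
qed

lemma norm_sym: "is_norm_on k N \<Longrightarrow> x \<in> Rk k \<Longrightarrow> y \<in> Rk k \<Longrightarrow> N (\<lambda>i. x i - y i) = N (\<lambda>i. y i - x i)"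
proof -
  assume a: "is_norm_on k N" "x \<in> Rk k" "y \<in> Rk k"
  have d: "(\<lambda>i. y i - x i) \<in> Rk k" using a by (auto simp: Rk_def)
  have hom: "\<forall>x\<in>Rk k. \<forall>c. N (\<lambda>i. c * x i) = \<bar>c\<bar> * N x"
    using a(1) unfolding is_norm_on_def by blast
  have "N (\<lambda>i. (-1) * (y i - x i)) = \<bar>-1\<bar> * N (\<lambda>i. y i - x i)"
    using hom[rule_format, OF d] by blast
  then show ?thesis by simp
qed

lemma L1_tri: "L1 k (\<lambda>i. x i - z i) \<le> L1 k (\<lambda>i. x i - y i) + L1 k (\<lambda>i. y i - z i)"
  unfolding L1_def by (simp add: sum.distrib[symmetric] sum_mono abs_triangle_ineq4 flip: sum.distrib)

lemma L1_sym: "L1 k (\<lambda>i. x i - y i) = L1 k (\<lambda>i. y i - x i)"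
  unfolding L1_def by (simp add: abs_minus_commute)

lemma open_L1: "open {z. L1 k (\<lambda>i. z i - y i) < d}"
proof -
  have "continuous_on UNIV (\<lambda>z::nat\<Rightarrow>real. L1 k (\<lambda>i. z i - y i))"
    unfolding L1_def by (intro continuous_intros continuous_on_product_coordinates)
  then show ?thesis by (simp add: open_Collect_less continuous_on_const)
qed

lemma key_cover:
  assumes nN: "is_norm_on k N" and AQ: "A \<subseteq> cube a b k"
    and nd: "top_of_set (cube a b k) interior_of A = {}" and e: "e > 0"
  shows "\<exists>P d q. finite P \<and> P \<subseteq> cube a b k \<and> d > 0 \<and>
     (\<forall>y\<in>P. q y \<in> cube a b k \<and> q y \<notin> A) \<and>
     (\<forall>z\<in>cube a b k. \<exists>y\<in>P. L1 k (\<lambda>i. z i - y i) < d) \<and>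
     (\<forall>y\<in>P. \<forall>z\<in>cube a b k. L1 k (\<lambda>i. z i - y i) < d \<longrightarrow> N (\<lambda>i. z i - q y i) \<le> e)"
proof -
  obtain C where C: "C > 0" "\<And>v. v \<in> Rk k \<Longrightarrow> N v \<le> C * L1 k v"
    using norm_L1[OF nN] by blast
  define d where "d = e / (2 * C)"
  have d: "d > 0" using C e by (simp add: d_def)
  let ?Q = "cube a b k"
  have ex: "\<exists>q. q \<in> ?Q \<and> q \<notin> A \<and> L1 k (\<lambda>i. q i - y i) < d" if y: "y \<in> ?Q" for y
  proof (rule ccontr)
    assume nex: "\<not> ?thesis"
    let ?O = "?Q \<inter> {z. L1 k (\<lambda>i. z i - y i) < d}"
    have op: "openin (top_of_set ?Q) ?O"
      by (rule openin_open_Int) (rule open_L1)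
    have sub: "?O \<subseteq> A" using nex by blast
    have "y \<in> ?O" using y d by (simp add: L1_def)
    then have "y \<in> top_of_set ?Q interior_of A"
      using interior_of_maximal[OF sub op] by blast
    then show False using nd by simp
  qed
  define q where "q y = (SOME q. q \<in> ?Q \<and> q \<notin> A \<and> L1 k (\<lambda>i. q i - y i) < d)" for y
  have q: "q y \<in> ?Q \<and> q y \<notin> A \<and> L1 k (\<lambda>i. q y i - y i) < d" if "y \<in> ?Q" for y
    unfolding q_def by (rule someI_ex[OF ex[OF that]])
  have cov: "?Q \<subseteq> (\<Union>y\<in>?Q. {z. L1 k (\<lambda>i. z i - y i) < d})"
    using d by (auto simp: L1_def)
  obtain P where P: "P \<subseteq> ?Q" "finite P" "?Q \<subseteq> (\<Union>y\<in>P. {z. L1 k (\<lambda>i. z i - y i) < d})"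
    by (rule compactE_image[OF compact_cube open_L1 cov]) blast
  have est: "N (\<lambda>i. z i - q y i) \<le> e"
    if yP: "y \<in> P" and z: "z \<in> ?Q" and zy: "L1 k (\<lambda>i. z i - y i) < d" for y z
  proof -
    have yQ: "y \<in> ?Q" using yP P(1) by blast
    have zR: "z \<in> Rk k" and qR: "q y \<in> Rk k" using z q[OF yQ] cube_Rk by blast+
    have "(\<lambda>i. z i - q y i) \<in> Rk k" using zR qR by (simp add: Rk_def)
    then have "N (\<lambda>i. z i - q y i) \<le> C * L1 k (\<lambda>i. z i - q y i)" by (rule C(2))
    also have "\<dots> \<le> C * (L1 k (\<lambda>i. z i - y i) + L1 k (\<lambda>i. y i - q y i))"
      using C(1) by (intro mult_left_mono L1_tri) auto
    also have "\<dots> \<le> C * (2 * d)"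
      using C(1) zy q[OF yQ] L1_sym[of k "q y" y] by (intro mult_left_mono) auto
    also have "\<dots> = e" using C(1) by (simp add: d_def)
    finally show ?thesis .
  qed
  show ?thesis
    apply (rule exI[of _ P], rule exI[of _ d], rule exI[of _ q])
    using P d q est by blast
qed

lemma sum_single:
  assumes "finite G" "pairwise disjnt G" "V \<in> G" "x \<in> V" "\<And>W. W \<in> G \<Longrightarrow> x \<notin> W \<Longrightarrow> c W = 0"
  shows "sum c G = c V"
proof -
  have "sum c G = c V + sum c (G - {V})" using assms(1,3) by (rule sum.remove)
  moreover have "sum c (G - {V}) = 0"
  proof (rule sum.neutral, rule ballI)
    fix W assume W: "W \<in> G - {V}"
    then have "disjnt V W" using assms(2,3) unfolding pairwise_def by blast
    then have "x \<notin> W" using assms(4) by (auto simp: disjnt_def)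
    then show "c W = 0" using W assms(5) by blast
  qed
  ultimately show ?thesis by simp
qed

lemma L1_cont: "(\<And>i. continuous_map X euclideanreal (\<lambda>x. F x i)) \<Longrightarrow>
   continuous_map X euclideanreal (\<lambda>x. L1 k (\<lambda>i. F x i - y i))"
  unfolding L1_def by (intro continuous_intros) auto

lemma forward:
  fixes X :: "'a topology"
  assumes fC: "finite_C_space X"
   and H: "\<forall>n. a n < b n \<and> 1 \<le> k n \<and> is_norm_on (k n) (N n) \<and>
            A n \<subseteq> cube (a n) (b n) (k n) \<and>
            closedin (subtopology (Euclidean_space (k n)) (cube (a n) (b n) (k n))) (A n) \<and>
            (subtopology (Euclidean_space (k n)) (cube (a n) (b n) (k n))) interior_of (A n) = {} \<and>
            continuous_map X (subtopology (Euclidean_space (k n)) (cube (a n) (b n) (k n))) (f n)"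
  shows "finitely_removable X (\<lambda>n. cube (a n) (b n) (k n)) k N A f"
  unfolding finitely_removable_def
proof (intro allI impI)
  fix \<epsilon> :: "nat \<Rightarrow> real" assume epos: "\<forall>n. 0 < \<epsilon> n"
  define Q where "Q n = cube (a n) (b n) (k n)" for n
  have conv: "\<And>n. subtopology (Euclidean_space (k n)) (Q n) = top_of_set (Q n)"
    unfolding Q_def by (rule sub_eu[OF cube_Rk])
  have nN: "\<And>n. is_norm_on (k n) (N n)" using H by blast
  have AQ: "\<And>n. A n \<subseteq> Q n" using H by (simp add: Q_def)
  have nd: "\<And>n. top_of_set (Q n) interior_of A n = {}" using H conv by (simp add: Q_def)
  have fcm: "\<And>n. continuous_map X (top_of_set (Q n)) (f n)" using H conv by (simp add: Q_def)
  have fc: "\<And>n i. continuous_map X euclideanreal (\<lambda>x. f n x i)"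
    and fQ: "\<And>n x. x \<in> topspace X \<Longrightarrow> f n x \<in> Q n"
    using fcm unfolding cm_top_of_set by blast+
  have "\<forall>n. \<exists>P d q. finite P \<and> P \<subseteq> Q n \<and> d > 0 \<and>
     (\<forall>y\<in>P. q y \<in> Q n \<and> q y \<notin> A n) \<and>
     (\<forall>z\<in>Q n. \<exists>y\<in>P. L1 (k n) (\<lambda>i. z i - y i) < d) \<and>
     (\<forall>y\<in>P. \<forall>z\<in>Q n. L1 (k n) (\<lambda>i. z i - y i) < d \<longrightarrow> N n (\<lambda>i. z i - q y i) \<le> \<epsilon> n)"
  proof
    fix n
    have AQ': "A n \<subseteq> cube (a n) (b n) (k n)" using AQ[of n] by (simp add: Q_def)
    have nd': "top_of_set (cube (a n) (b n) (k n)) interior_of A n = {}" using nd[of n] by (simp add: Q_def)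
    show "\<exists>P d q. finite P \<and> P \<subseteq> Q n \<and> d > 0 \<and>
     (\<forall>y\<in>P. q y \<in> Q n \<and> q y \<notin> A n) \<and>
     (\<forall>z\<in>Q n. \<exists>y\<in>P. L1 (k n) (\<lambda>i. z i - y i) < d) \<and>
     (\<forall>y\<in>P. \<forall>z\<in>Q n. L1 (k n) (\<lambda>i. z i - y i) < d \<longrightarrow> N n (\<lambda>i. z i - q y i) \<le> \<epsilon> n)"
      unfolding Q_def by (rule key_cover[OF nN AQ' nd']) (use epos in blast)
  qed
  note ex = this[unfolded choice_iff]
  from ex obtain P d q where Pdq: "\<And>n. finite (P n) \<and> P n \<subseteq> Q n \<and> d n > 0 \<and>
     (\<forall>y\<in>P n. q n y \<in> Q n \<and> q n y \<notin> A n) \<and>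
     (\<forall>z\<in>Q n. \<exists>y\<in>P n. L1 (k n) (\<lambda>i. z i - y i) < d n) \<and>
     (\<forall>y\<in>P n. \<forall>z\<in>Q n. L1 (k n) (\<lambda>i. z i - y i) < d n \<longrightarrow> N n (\<lambda>i. z i - q n y i) \<le> \<epsilon> n)"
    by blast
  define B where "B n y = {x \<in> topspace X. L1 (k n) (\<lambda>i. f n x i - y i) < d n}" for n y
  define \<omega> where "\<omega> n = B n ` P n" for n
  have \<omega>: "finite (\<omega> n) \<and> (\<forall>U\<in>\<omega> n. functionally_open X U) \<and> \<Union>(\<omega> n) = topspace X" for n
  proof (intro conjI)
    show "finite (\<omega> n)" using Pdq by (simp add: \<omega>_def)
    show "\<forall>U\<in>\<omega> n. functionally_open X U"
    proof
      fix U assume "U \<in> \<omega> n"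
      then obtain y where U: "U = B n y" by (auto simp: \<omega>_def)
      show "functionally_open X U"
        apply (rule fo_intro[of X "\<lambda>x. max 0 (d n - L1 (k n) (\<lambda>i. f n x i - y i))"])
         apply (intro continuous_intros L1_cont fc)
        by (auto simp: U B_def)
    qed
    show "\<Union>(\<omega> n) = topspace X"
    proof
      show "\<Union>(\<omega> n) \<subseteq> topspace X" by (auto simp: \<omega>_def B_def)
      show "topspace X \<subseteq> \<Union>(\<omega> n)"
      proof
        fix x assume x: "x \<in> topspace X"
        then obtain y where "y \<in> P n" "L1 (k n) (\<lambda>i. f n x i - y i) < d n"
          using Pdq fQ by blast
        then show "x \<in> \<Union>(\<omega> n)" using x by (auto simp: \<omega>_def B_def)
      qed
    qed
  qed
  have \<omega>': "\<forall>n. finite (\<omega> n) \<and> (\<forall>U\<in>\<omega> n. functionally_open X U) \<and> \<Union>(\<omega> n) = topspace X"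
    using \<omega> by blast
  have "\<exists>m \<gamma>. (\<forall>n<m. finite (\<gamma> n) \<and> (\<forall>U\<in>\<gamma> n. functionally_open X U) \<and>
                 pairwise disjnt (\<gamma> n) \<and> refines (\<gamma> n) (\<omega> n)) \<and>
          topspace X \<subseteq> (\<Union>n<m. \<Union>(\<gamma> n))"
    by (rule fC[unfolded finite_C_space_def, THEN spec, THEN mp, OF \<omega>'])
  then obtain m \<gamma> where \<gamma>: "\<forall>n<m. finite (\<gamma> n) \<and> (\<forall>U\<in>\<gamma> n. functionally_open X U) \<and>
                 pairwise disjnt (\<gamma> n) \<and> refines (\<gamma> n) (\<omega> n)"
    and cov: "topspace X \<subseteq> (\<Union>n<m. \<Union>(\<gamma> n))"
    by (elim exE conjE)
  have yex: "\<exists>y. y \<in> P n \<and> V \<subseteq> B n y" if "n < m" "V \<in> \<gamma> n" for n V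
    using \<gamma> that unfolding refines_def \<omega>_def by blast
  define yV where "yV n V = (SOME y. y \<in> P n \<and> V \<subseteq> B n y)" for n V
  have yV: "yV n V \<in> P n \<and> V \<subseteq> B n (yV n V)" if "n < m" "V \<in> \<gamma> n" for n V
    unfolding yV_def by (rule someI_ex[OF yex[OF that]])
  have hex: "\<exists>hh. continuous_map X euclideanreal hh \<and> V = {x \<in> topspace X. hh x \<noteq> 0}" if "n < m" "V \<in> \<gamma> n" for n V
    using \<gamma> that unfolding functionally_open_def by blast
  define h where "h n V = (SOME hh. continuous_map X euclideanreal hh \<and> V = {x \<in> topspace X. hh x \<noteq> 0})" for n :: nat and V
  have h: "continuous_map X euclideanreal (h n V) \<and> V = {x \<in> topspace X. h n V x \<noteq> 0}" if "n < m" "V \<in> \<gamma> n" for n V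
    unfolding h_def by (rule someI_ex[OF hex[OF that]])
  define S where "S = Sigma {..<m} \<gamma>"
  have finS: "finite S" unfolding S_def by (rule finite_SigmaI) (use \<gamma> in auto)
  define HH where "HH x = (\<Sum>p\<in>S. \<bar>h (fst p) (snd p) x\<bar>)" for x
  define M where "M = real (card S)"
  define \<phi> where "\<phi> n V x = min 1 (M * \<bar>h n V x\<bar> / HH x)" for n V x
  have HHpos: "HH x > 0" if x: "x \<in> topspace X" for x
  proof -
    obtain n V where nV: "n < m" "V \<in> \<gamma> n" "x \<in> V" using cov x by blast
    then have p: "(n, V) \<in> S" by (simp add: S_def)
    have "h n V x \<noteq> 0" using h[OF nV(1,2)] nV(3) by blast
    then have "0 < \<bar>h (fst (n,V)) (snd (n,V)) x\<bar>" by simp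
    also have "\<dots> \<le> HH x" unfolding HH_def by (rule member_le_sum[OF p]) (auto simp: finS)
    finally show ?thesis .
  qed
  have HHc: "continuous_map X euclideanreal HH"
    unfolding HH_def by (intro continuous_map_sum finS continuous_intros) (use h S_def in auto)
  have \<phi>c: "continuous_map X euclideanreal (\<phi> n V)" if "n < m" "V \<in> \<gamma> n" for n V
  proof -
    have nz: "\<And>x. x \<in> topspace X \<Longrightarrow> HH x \<noteq> 0" using HHpos by (metis less_irrefl)
    show ?thesis unfolding \<phi>_def using h[OF that, THEN conjunct1] HHc nz
      by (intro continuous_intros) auto
  qed
  have \<phi>01: "0 \<le> \<phi> n V x \<and> \<phi> n V x \<le> 1" if "x \<in> topspace X" for n V x
    using HHpos[OF that] by (auto simp: \<phi>_def M_def)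
  have \<phi>0: "\<phi> n V x = 0" if "n < m" "V \<in> \<gamma> n" "x \<in> topspace X" "x \<notin> V" for n V x
  proof -
    have "h n V x = 0" using h[OF that(1,2)] that(3,4) by blast
    then show ?thesis by (simp add: \<phi>_def)
  qed
  have \<phi>1: "\<exists>n V. n < m \<and> V \<in> \<gamma> n \<and> x \<in> V \<and> \<phi> n V x = 1" if x: "x \<in> topspace X" for x
  proof -
    have Sne: "S \<noteq> {}" using cov x by (auto simp: S_def)
    define g where "g p = \<bar>h (fst p) (snd p) x\<bar>" for p
    define mx where "mx = Max (g ` S)"
    have "mx \<in> g ` S" unfolding mx_def using finS Sne by (intro Max_in) auto
    then obtain p where p: "p \<in> S" "g p = mx" by auto
    have ge: "\<And>p'. p' \<in> S \<Longrightarrow> g p' \<le> mx" unfolding mx_def using finS by (intro Max_ge) auto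
    have "HH x \<le> of_nat (card S) * mx" unfolding HH_def
      using ge by (intro sum_bounded_above) (auto simp: g_def)
    then have le: "HH x \<le> M * g p" using p by (simp add: M_def)
    obtain n V where nV: "p = (n, V)" by (cases p)
    have nm: "n < m" "V \<in> \<gamma> n" using p nV by (auto simp: S_def)
    have "M * \<bar>h n V x\<bar> / HH x \<ge> 1" using le HHpos[OF x] nV by (simp add: g_def)
    then have phi1: "\<phi> n V x = 1" by (simp add: \<phi>_def)
    have "x \<in> V"
    proof (rule ccontr)
      assume "x \<notin> V" then show False using \<phi>0[OF nm x] phi1 by simp
    qed
    then show ?thesis using nm phi1 by blast
  qed
  define g where "g n x i = f n x i + (\<Sum>V\<in>\<gamma> n. \<phi> n V x * (q n (yV n V) i - f n x i))" for n x i
  have gcases: "(g n x = f n x) \<or> (\<exists>V\<in>\<gamma> n. x \<in> V \<and> g n x = (\<lambda>i. f n x i + \<phi> n V x * (q n (yV n V) i - f n x i)))"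
    if nm: "n < m" and x: "x \<in> topspace X" for n x
  proof (cases "\<exists>V\<in>\<gamma> n. x \<in> V")
    case True
    then obtain V where V: "V \<in> \<gamma> n" "x \<in> V" by blast
    have "g n x i = f n x i + \<phi> n V x * (q n (yV n V) i - f n x i)" for i
      unfolding g_def
      by (subst sum_single[of "\<gamma> n" V x]) (use \<gamma> nm V \<phi>0 x in auto)
    then show ?thesis using V by blast
  next
    case False
    have "g n x i = f n x i" for i
      unfolding g_def using False \<phi>0[OF nm _ x] by simp
    then show ?thesis by blast
  qed
  have Qfacts: "\<And>n z. z \<in> Q n \<longleftrightarrow> (\<forall>i\<ge>k n. z i = 0) \<and> (\<forall>i<k n. a n \<le> z i \<and> z i \<le> b n)"
    by (auto simp: Q_def cube_def Rk_def)
  have gQ: "g n x \<in> Q n" if nm: "n < m" and x: "x \<in> topspace X" for n x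
    using gcases[OF nm x]
  proof
    assume "g n x = f n x" then show ?thesis using fQ[OF x] by simp
  next
    assume "\<exists>V\<in>\<gamma> n. x \<in> V \<and> g n x = (\<lambda>i. f n x i + \<phi> n V x * (q n (yV n V) i - f n x i))"
    then obtain V where V: "V \<in> \<gamma> n" "x \<in> V" and geq: "g n x = (\<lambda>i. f n x i + \<phi> n V x * (q n (yV n V) i - f n x i))"
      by blast
    have qQ: "q n (yV n V) \<in> Q n" using Pdq yV[OF nm V(1)] by blast
    have fx: "f n x \<in> Q n" using fQ[OF x] .
    have p01: "0 \<le> \<phi> n V x" "\<phi> n V x \<le> 1" using \<phi>01[OF x] by auto
    have conv1: "u \<le> s + t * (r - s)" if "u \<le> s" "u \<le> r" "0 \<le> t" "t \<le> 1" for u s r t :: real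
    proof -
      have "0 \<le> (1 - t) * (s - u)" "0 \<le> t * (r - u)" using that by auto
      moreover have "s + t * (r - s) - u = (1 - t) * (s - u) + t * (r - u)" by algebra
      ultimately show ?thesis by linarith
    qed
    have conv2: "s + t * (r - s) \<le> u" if "s \<le> u" "r \<le> u" "0 \<le> t" "t \<le> 1" for u s r t :: real
    proof -
      have "0 \<le> (1 - t) * (u - s)" "0 \<le> t * (u - r)" using that by auto
      moreover have "u - (s + t * (r - s)) = (1 - t) * (u - s) + t * (u - r)" by algebra
      ultimately show ?thesis by linarith
    qed
    show ?thesis unfolding geq Qfacts
      using qQ fx p01 conv1 conv2 unfolding Qfacts by simp
  qed
  have gc: "continuous_map X (subtopology (Euclidean_space (k n)) (Q n)) (g n)" if nm: "n < m" for n
    unfolding conv cm_top_of_set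
  proof (intro conjI allI)
    show "continuous_map X euclideanreal (\<lambda>x. g n x i)" for i
      unfolding g_def using \<gamma> nm \<phi>c fc by (intro continuous_intros) auto
    show "g n ` topspace X \<subseteq> Q n" using gQ nm by blast
  qed
  have gd: "N n (\<lambda>i. f n x i - g n x i) \<le> \<epsilon> n" if nm: "n < m" and x: "x \<in> topspace X" for n x
    using gcases[OF nm x]
  proof
    assume "g n x = f n x" then show ?thesis using norm_zero[OF nN] epos by (simp add: less_imp_le)
  next
    assume "\<exists>V\<in>\<gamma> n. x \<in> V \<and> g n x = (\<lambda>i. f n x i + \<phi> n V x * (q n (yV n V) i - f n x i))"
    then obtain V where V: "V \<in> \<gamma> n" "x \<in> V" and geq: "g n x = (\<lambda>i. f n x i + \<phi> n V x * (q n (yV n V) i - f n x i))"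
      by blast
    let ?y = "yV n V"
    have yP: "?y \<in> P n" and VB: "V \<subseteq> B n ?y" using yV[OF nm V(1)] by auto
    have qQ: "q n ?y \<in> Q n" using Pdq yP by blast
    have fx: "f n x \<in> Q n" using fQ[OF x] .
    have Lx: "L1 (k n) (\<lambda>i. f n x i - ?y i) < d n" using VB V(2) by (auto simp: B_def)
    have est: "N n (\<lambda>i. f n x i - q n ?y i) \<le> \<epsilon> n" using Pdq yP fx Lx by blast
    have dR: "(\<lambda>i. f n x i - q n ?y i) \<in> Rk (k n)" using qQ fx by (auto simp: Qfacts Rk_def)
    have hom: "\<forall>x\<in>Rk (k n). \<forall>c. N n (\<lambda>i. c * x i) = \<bar>c\<bar> * N n x"
      using nN unfolding is_norm_on_def by blast
    have "(\<lambda>i. f n x i - g n x i) = (\<lambda>i. \<phi> n V x * (f n x i - q n ?y i))"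
      unfolding geq by (rule ext) algebra
    then have "N n (\<lambda>i. f n x i - g n x i) = \<bar>\<phi> n V x\<bar> * N n (\<lambda>i. f n x i - q n ?y i)"
      using hom[rule_format, OF dR] by simp
    also have "\<dots> \<le> 1 * \<epsilon> n"
    proof -
      have nn: "0 \<le> N n (\<lambda>i. f n x i - q n ?y i)" using nN dR unfolding is_norm_on_def by blast
      show ?thesis using \<phi>01[OF x] est epos nn by (intro mult_mono) (auto simp: less_imp_le)
    qed
    finally show ?thesis by simp
  qed
  have gA: "\<exists>n<m. g n x \<notin> A n" if x: "x \<in> topspace X" for x
  proof -
    obtain n V where nV: "n < m" "V \<in> \<gamma> n" "x \<in> V" "\<phi> n V x = 1" using \<phi>1[OF x] by blast
    have "g n x i = q n (yV n V) i" for i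
      unfolding g_def
      by (subst sum_single[of "\<gamma> n" V x]) (use \<gamma> nV \<phi>0 x in auto)
    then have "g n x = q n (yV n V)" by auto
    moreover have "q n (yV n V) \<notin> A n" using Pdq yV[OF nV(1,2)] by blast
    ultimately show ?thesis using nV by auto
  qed
  show "\<exists>m g. (\<forall>n<m. continuous_map X (subtopology (Euclidean_space (k n)) (cube (a n) (b n) (k n))) (g n) \<and>
                 (\<forall>x\<in>topspace X. N n (\<lambda>i. f n x i - g n x i) \<le> \<epsilon> n)) \<and>
          (\<forall>x\<in>topspace X. \<exists>n<m. g n x \<notin> A n)"
    apply (rule exI[of _ m], rule exI[of _ g])
    using gc gd gA unfolding Q_def by blast
qed

lemma L1_norm: "is_norm_on k (L1 k)"
  unfolding is_norm_on_def
proof (intro conjI ballI allI)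
  fix x assume x: "x \<in> Rk k"
  show "0 \<le> L1 k x" by (simp add: L1_def sum_nonneg)
  show "(L1 k x = 0) = (\<forall>i. x i = 0)"
  proof
    assume "L1 k x = 0"
    then have "\<forall>i\<in>{..<k}. \<bar>x i\<bar> = 0" unfolding L1_def
      by (subst sum_nonneg_eq_0_iff[symmetric]) auto
    then show "\<forall>i. x i = 0" using x by (auto simp: Rk_def) (metis lessThan_iff not_le)
  qed (simp add: L1_def)
  show "L1 k (\<lambda>i. c * x i) = \<bar>c\<bar> * L1 k x" for c
    by (simp add: L1_def abs_mult sum_distrib_left)
next
  fix x y assume "x \<in> Rk k" "y \<in> Rk k"
  show "L1 k (\<lambda>i. x i + y i) \<le> L1 k x + L1 k y"
    unfolding L1_def by (simp add: sum_mono abs_triangle_ineq flip: sum.distrib)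
qed

definition Ad :: "nat \<Rightarrow> (nat \<Rightarrow> real) set" where
  "Ad c = {y \<in> cube 0 1 c. \<forall>i<c. \<exists>j<c. j \<noteq> i \<and> y i \<le> y j}"

lemma Ad_closed: "closedin (top_of_set (cube 0 1 c)) (Ad c)"
proof -
  have eq: "Ad c = cube 0 1 c \<inter> (\<Inter>i\<in>{..<c}. \<Union>j\<in>{j. j < c \<and> j \<noteq> i}. {y. y i \<le> y j})"
    by (auto simp: Ad_def)
  have cl: "closed {y::nat\<Rightarrow>real. y i \<le> y j}" for i j
    by (intro closed_Collect_le continuous_on_product_coordinates)
  have "closed (\<Inter>i\<in>{..<c}. \<Union>j\<in>{j. j < c \<and> j \<noteq> i}. {y::nat\<Rightarrow>real. y i \<le> y j})"
    by (intro closed_INT ballI closed_UN) (auto intro: cl)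
  then show ?thesis unfolding eq by (rule closedin_closed_Int)
qed

lemma Ad_nd:
  assumes c: "1 \<le> c"
  shows "top_of_set (cube 0 1 c) interior_of Ad c = {}"
proof (rule ccontr)
  assume "top_of_set (cube 0 1 c) interior_of Ad c \<noteq> {}"
  then obtain y T where T: "openin (top_of_set (cube 0 1 c)) T" "y \<in> T" "T \<subseteq> Ad c"
    unfolding interior_of_def by blast
  obtain U where U: "open U" "T = cube 0 1 c \<inter> U" using T(1) unfolding openin_open by blast
  have yA: "y \<in> Ad c" using T by blast
  then have yQ: "y \<in> cube 0 1 c" by (simp add: Ad_def)
  have ne: "y ` {..<c} \<noteq> {}" using c by (auto simp: lessThan_empty_iff)
  have "Max (y ` {..<c}) \<in> y ` {..<c}" using ne by (intro Max_in) auto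
  then obtain i0 where i0: "i0 < c" "y i0 = Max (y ` {..<c})" by auto
  have ymax: "\<And>j. j < c \<Longrightarrow> y j \<le> y i0" using i0 by simp
  define p where "p t = (\<lambda>i. if i < c then (if i = i0 then (1 - t) * y i + t else (1 - t) * y i) else 0)" for t :: real
  have pc: "continuous_on UNIV p"
    unfolding p_def
  proof (intro continuous_on_coordinatewise_then_product)
    fix i
    show "continuous_on UNIV (\<lambda>x::real. if i < c then if i = i0 then (1 - x) * y i + x else (1 - x) * y i else 0)"
      by (cases "i < c"; cases "i = i0") (auto intro!: continuous_intros)
  qed
  have p0: "p 0 = y" using yQ by (auto simp: p_def cube_def Rk_def not_less)
  have "open (p -` U)" by (rule open_vimage[OF U(1) pc])
  moreover have "0 \<in> p -` U" using p0 T U by auto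
  ultimately obtain e where e: "e > 0" "ball 0 e \<subseteq> p -` U" using open_contains_ball by blast
  define t where "t = min (e/2) (1/2)"
  have t: "0 < t" "t < 1" "t < e" using e by (auto simp: t_def)
  have "t \<in> ball 0 e" using t by (simp add: dist_real_def)
  then have "p t \<in> U" using e by blast
  moreover have "p t \<in> cube 0 1 c"
  proof -
    have "0 \<le> (1 - t) * y i" "(1 - t) * y i \<le> 1" "(1 - t) * y i + t \<le> 1" if "i < c" for i
    proof -
      have yi: "0 \<le> y i" "y i \<le> 1" using yQ that by (auto simp: cube_def)
      show "0 \<le> (1 - t) * y i" using yi t by simp
      show "(1 - t) * y i \<le> 1" using yi t by (simp add: mult_le_one)
      have "(1 - t) * y i \<le> (1 - t) * 1" using yi t by (intro mult_left_mono) auto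
      then show "(1 - t) * y i + t \<le> 1" by simp
    qed
    then show ?thesis using t by (auto simp: p_def cube_def Rk_def)
  qed
  ultimately have "p t \<in> Ad c" using T U by blast
  then obtain j where j: "j < c" "j \<noteq> i0" "p t i0 \<le> p t j" using i0 by (auto simp: Ad_def)
  have "p t i0 = (1 - t) * y i0 + t" "p t j = (1 - t) * y j" using i0 j by (auto simp: p_def)
  moreover have "(1 - t) * y j \<le> (1 - t) * y i0" using ymax[OF j(1)] t by (intro mult_left_mono) auto
  ultimately show False using j t by linarith
qed

lemma backward:
  fixes X :: "'a topology"
  assumes R: "\<forall>(a :: nat \<Rightarrow> real) (b :: nat \<Rightarrow> real) (k :: nat \<Rightarrow> nat)
       (N :: nat \<Rightarrow> (nat \<Rightarrow> real) \<Rightarrow> real) (A :: nat \<Rightarrow> (nat \<Rightarrow> real) set)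
       (f :: nat \<Rightarrow> 'a \<Rightarrow> nat \<Rightarrow> real).
       (\<forall>n. a n < b n \<and> 1 \<le> k n \<and> is_norm_on (k n) (N n) \<and>
            A n \<subseteq> cube (a n) (b n) (k n) \<and>
            closedin (subtopology (Euclidean_space (k n)) (cube (a n) (b n) (k n))) (A n) \<and>
            (subtopology (Euclidean_space (k n)) (cube (a n) (b n) (k n))) interior_of (A n) = {} \<and>
            continuous_map X (subtopology (Euclidean_space (k n)) (cube (a n) (b n) (k n))) (f n))
       \<longrightarrow> finitely_removable X (\<lambda>n. cube (a n) (b n) (k n)) k N A f"
  shows "finite_C_space X"
  unfolding finite_C_space_def
proof (intro allI impI)
  fix \<omega> :: "nat \<Rightarrow> 'a set set"
  assume h\<omega>: "\<forall>n. finite (\<omega> n) \<and> (\<forall>U\<in>\<omega> n. functionally_open X U) \<and> \<Union>(\<omega> n) = topspace X"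
  show "\<exists>k \<gamma>. (\<forall>n<k. finite (\<gamma> n) \<and> (\<forall>U\<in>\<gamma> n. functionally_open X U) \<and>
                 pairwise disjnt (\<gamma> n) \<and> refines (\<gamma> n) (\<omega> n)) \<and>
          topspace X \<subseteq> (\<Union>n<k. \<Union>(\<gamma> n))"
  proof (cases "topspace X = {}")
    case True
    then show ?thesis by (intro exI[of _ 0]) auto
  next
    case False
    then obtain x0 where x0: "x0 \<in> topspace X" by blast
    define c where "c n = card (\<omega> n)" for n
    have c1: "1 \<le> c n" for n
    proof -
      have "\<omega> n \<noteq> {}" using h\<omega> x0 by auto
      then show ?thesis using h\<omega> by (simp add: c_def Suc_le_eq card_gt_0_iff)
    qed
    have Uex: "\<exists>U. \<omega> n = U ` {..<c n}" for n
    proof -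
      obtain bj where "bij_betw bj {0..<card (\<omega> n)} (\<omega> n)"
        using ex_bij_betw_nat_finite[of "\<omega> n"] h\<omega> by blast
      then have "\<omega> n = bj ` {..<c n}" by (simp add: bij_betw_def c_def lessThan_atLeast0)
      then show ?thesis by blast
    qed
    define U where "U n = (SOME U. \<omega> n = U ` {..<c n})" for n
    have U: "\<omega> n = U n ` {..<c n}" for n
      unfolding U_def by (rule someI_ex[OF Uex])
    have hex: "\<exists>hh. continuous_map X euclideanreal hh \<and> U n i = {x \<in> topspace X. hh x \<noteq> 0}" if "i < c n" for n i
    proof -
      have "U n i \<in> \<omega> n" using that by (simp add: U)
      then have "functionally_open X (U n i)" using h\<omega> by blast
      then show ?thesis unfolding functionally_open_def by blast
    qed
    define h where "h n i = (SOME hh. continuous_map X euclideanreal hh \<and> U n i = {x \<in> topspace X. hh x \<noteq> 0})" for n i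
    have h: "continuous_map X euclideanreal (h n i) \<and> U n i = {x \<in> topspace X. h n i x \<noteq> 0}" if "i < c n" for n i
      unfolding h_def by (rule someI_ex[OF hex[OF that]])
    define SS where "SS n x = (\<Sum>i<c n. \<bar>h n i x\<bar>)" for n x
    have SSpos: "SS n x > 0" if x: "x \<in> topspace X" for n x
    proof -
      have "x \<in> \<Union>(\<omega> n)" using h\<omega> x by auto
      then obtain i where i: "i < c n" "x \<in> U n i" using U by auto
      then have "0 < \<bar>h n i x\<bar>" using h[OF i(1)] by auto
      also have "\<dots> \<le> SS n x" unfolding SS_def using i by (intro member_le_sum) auto
      finally show ?thesis .
    qed
    have SSc: "continuous_map X euclideanreal (SS n)" for n
      unfolding SS_def using h by (intro continuous_intros) auto
    define f where "f n x i = (if i < c n then \<bar>h n i x\<bar> / SS n x else 0)" for n x i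
    have fsum: "(\<Sum>i<c n. f n x i) = 1" if x: "x \<in> topspace X" for n x
    proof -
      have "(\<Sum>i<c n. f n x i) = (\<Sum>i<c n. \<bar>h n i x\<bar> / SS n x)" by (simp add: f_def)
      also have "\<dots> = (\<Sum>i<c n. \<bar>h n i x\<bar>) / SS n x" by (rule sum_divide_distrib[symmetric])
      also have "\<dots> = SS n x / SS n x" by (simp add: SS_def)
      moreover have "SS n x \<noteq> 0" using SSpos[OF x, of n] by simp
      ultimately show ?thesis by simp
    qed
    have fQ: "f n x \<in> cube 0 1 (c n)" if x: "x \<in> topspace X" for n x
    proof -
      have "\<bar>h n i x\<bar> \<le> SS n x" if "i < c n" for i
        unfolding SS_def using that by (intro member_le_sum) auto
      moreover have sp: "0 < SS n x" using SSpos[OF x, of n] .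
      ultimately show ?thesis by (auto simp: f_def cube_def Rk_def)
    qed
    have fc: "continuous_map X (subtopology (Euclidean_space (c n)) (cube 0 1 (c n))) (f n)" for n
      unfolding sub_eu[OF cube_Rk] cm_top_of_set
    proof (intro conjI allI)
      fix i
      show "continuous_map X euclideanreal (\<lambda>x. f n x i)"
      proof (cases "i < c n")
        case True
        have nz: "\<And>x. x \<in> topspace X \<Longrightarrow> SS n x \<noteq> 0" using SSpos by (metis less_irrefl)
        show ?thesis unfolding f_def using h[OF True] SSc nz True
          by (simp, intro continuous_intros) auto
      qed (simp add: f_def)
      show "f n ` topspace X \<subseteq> cube 0 1 (c n)" using fQ by blast
    qed
    define \<epsilon> where "\<epsilon> n = 1 / (4 * real (c n))" for n
    have epos: "\<forall>n. 0 < \<epsilon> n"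
    proof
      fix n have "0 < c n" using c1[of n] by simp
      then show "0 < \<epsilon> n" by (simp add: \<epsilon>_def)
    qed
    have hyp: "\<forall>n. (\<lambda>n. 0::real) n < (\<lambda>n. 1) n \<and> 1 \<le> c n \<and> is_norm_on (c n) ((\<lambda>n. L1 (c n)) n) \<and>
            Ad (c n) \<subseteq> cube 0 1 (c n) \<and>
            closedin (subtopology (Euclidean_space (c n)) (cube 0 1 (c n))) (Ad (c n)) \<and>
            (subtopology (Euclidean_space (c n)) (cube 0 1 (c n))) interior_of (Ad (c n)) = {} \<and>
            continuous_map X (subtopology (Euclidean_space (c n)) (cube 0 1 (c n))) (f n)"
      using c1 L1_norm Ad_closed Ad_nd fc by (simp add: sub_eu[OF cube_Rk] Ad_def)
    have "finitely_removable X (\<lambda>n. cube 0 1 (c n)) c (\<lambda>n. L1 (c n)) (\<lambda>n. Ad (c n)) f"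
      using R[rule_format, of "\<lambda>n. 0" "\<lambda>n. 1" c "\<lambda>n. L1 (c n)" "\<lambda>n. Ad (c n)" f] hyp by simp
    then obtain m g where
      gprop: "\<forall>n<m. continuous_map X (subtopology (Euclidean_space (c n)) (cube 0 1 (c n))) (g n) \<and>
                 (\<forall>x\<in>topspace X. L1 (c n) (\<lambda>i. f n x i - g n x i) \<le> \<epsilon> n)"
      and gA: "\<forall>x\<in>topspace X. \<exists>n<m. g n x \<notin> Ad (c n)"
      unfolding finitely_removable_def using epos by blast
    have gc: "\<And>n i. n < m \<Longrightarrow> continuous_map X euclideanreal (\<lambda>x. g n x i)"
      and gQ: "\<And>n x. n < m \<Longrightarrow> x \<in> topspace X \<Longrightarrow> g n x \<in> cube 0 1 (c n)"
      using gprop unfolding sub_eu[OF cube_Rk] cm_top_of_set by blast+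
    define W where "W n i = {x \<in> topspace X. \<forall>j<c n. j \<noteq> i \<longrightarrow> g n x j < g n x i}" for n i
    define \<gamma> where "\<gamma> n = W n ` {..<c n}" for n
    have WU: "W n i \<subseteq> U n i" if nm: "n < m" and i: "i < c n" for n i
    proof
      fix x assume xW: "x \<in> W n i"
      then have x: "x \<in> topspace X" by (simp add: W_def)
      define F where "F = f n x"
      define G where "G = g n x"
      define C where "C = real (c n)"
      have C1: "1 \<le> C" using c1 by (simp add: C_def)
      define \<delta> where "\<delta> = (\<Sum>j<c n. \<bar>F j - G j\<bar>)"
      have dle: "\<delta> \<le> 1 / (4 * C)" using gprop nm x by (simp add: \<delta>_def F_def G_def L1_def \<epsilon>_def C_def)
      have Cd: "C * \<delta> \<le> 1/4" using dle C1 by (simp add: field_simps)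
      have dnn: "0 \<le> \<delta>" by (simp add: \<delta>_def sum_nonneg)
      have "1 * \<delta> \<le> C * \<delta>" using mult_right_mono[OF C1 dnn] .
      then have d14: "\<delta> \<le> 1/4" using Cd by linarith
      have Gle: "G j \<le> G i" if "j < c n" for j
        using xW that by (cases "j = i") (auto simp: W_def G_def less_imp_le)
      have s1: "(\<Sum>j<c n. G j) \<le> C * G i"
        using sum_bounded_above[of "{..<c n}" G "G i"] Gle by (simp add: C_def)
      have s2: "(\<Sum>j<c n. F j) - (\<Sum>j<c n. G j) \<le> \<delta>"
        unfolding \<delta>_def by (simp add: sum_subtractf[symmetric] sum_mono)
      have sF: "(\<Sum>j<c n. F j) = 1" using fsum[OF x] by (simp add: F_def)
      have s3: "\<bar>F i - G i\<bar> \<le> \<delta>" unfolding \<delta>_def using i by (intro member_le_sum) auto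
      have "C * F i \<ge> C * G i - C * \<delta>"
      proof -
        have "F i \<ge> G i - \<delta>" using s3 by linarith
        then have "C * F i \<ge> C * (G i - \<delta>)" using C1 by (intro mult_left_mono) auto
        then show ?thesis by (simp add: right_diff_distrib)
      qed
      then have "C * F i > 0" using s1 s2 sF Cd d14 by linarith
      then have "F i > 0" using C1 by (simp add: zero_less_mult_iff)
      then have "h n i x \<noteq> 0" using i by (auto simp: F_def f_def)
      then show "x \<in> U n i" using h[OF i] x by blast
    qed
    show ?thesis
    proof (intro exI[of _ m] exI[of _ \<gamma>] conjI allI impI)
      fix n assume nm: "n < m"
      show "finite (\<gamma> n)" by (simp add: \<gamma>_def)
      show "\<forall>U\<in>\<gamma> n. functionally_open X U"
      proof
        fix V assume "V \<in> \<gamma> n"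
        then obtain i where i: "i < c n" "V = W n i" by (auto simp: \<gamma>_def)
        show "functionally_open X V"
        proof (rule fo_intro[of X "\<lambda>x. \<Prod>j\<in>{j. j < c n \<and> j \<noteq> i}. max 0 (g n x i - g n x j)"])
          show "continuous_map X euclideanreal (\<lambda>x. \<Prod>j\<in>{j. j < c n \<and> j \<noteq> i}. max 0 (g n x i - g n x j))"
            using gc[OF nm] by (intro continuous_intros) auto
          show "V = {x \<in> topspace X. (\<Prod>j\<in>{j. j < c n \<and> j \<noteq> i}. max 0 (g n x i - g n x j)) \<noteq> 0}"
            unfolding i(2) W_def by (auto simp: prod_zero_iff max_def not_le)
        qed
      qed
      show "pairwise disjnt (\<gamma> n)"
        unfolding pairwise_def \<gamma>_def
      proof (clarify)
        fix i i' assume ii: "i < c n" "i' < c n" "W n i \<noteq> W n i'"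
        then have ne: "i \<noteq> i'" by blast
        show "disjnt (W n i) (W n i')" unfolding disjnt_def
        proof (rule equals0I)
          fix x assume "x \<in> W n i \<inter> W n i'"
          then have "g n x i' < g n x i" "g n x i < g n x i'"
            using ne ii(1,2) unfolding W_def by auto
          then show False by simp
        qed
      qed
      show "refines (\<gamma> n) (\<omega> n)"
        unfolding refines_def \<gamma>_def U using WU[OF nm] by blast
    next
      show "topspace X \<subseteq> (\<Union>n<m. \<Union>(\<gamma> n))"
      proof
        fix x assume x: "x \<in> topspace X"
        then obtain n where n: "n < m" "g n x \<notin> Ad (c n)" using gA by blast
        then have "\<not> (\<forall>i<c n. \<exists>j<c n. j \<noteq> i \<and> g n x i \<le> g n x j)"
          using gQ[OF n(1) x] by (simp add: Ad_def)
        then obtain i where i: "i < c n" "\<forall>j<c n. j \<noteq> i \<longrightarrow> g n x j < g n x i"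
          by (auto simp: not_le)
        then have "x \<in> W n i" using x by (simp add: W_def)
        then show "x \<in> (\<Union>n<m. \<Union>(\<gamma> n))" using n i by (auto simp: \<gamma>_def)
      qed
    qed
  qed
qed



theorem corollary5p2:
  fixes X :: "'a topology"
  assumes "tychonoff_space X"
  shows "finite_C_space X \<longleftrightarrow>
    (\<forall>(a :: nat \<Rightarrow> real) (b :: nat \<Rightarrow> real) (k :: nat \<Rightarrow> nat)
       (N :: nat \<Rightarrow> (nat \<Rightarrow> real) \<Rightarrow> real) (A :: nat \<Rightarrow> (nat \<Rightarrow> real) set)
       (f :: nat \<Rightarrow> 'a \<Rightarrow> nat \<Rightarrow> real).
       (\<forall>n. a n < b n \<and> 1 \<le> k n \<and> is_norm_on (k n) (N n) \<and>
            A n \<subseteq> cube (a n) (b n) (k n) \<and>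
            closedin (subtopology (Euclidean_space (k n)) (cube (a n) (b n) (k n))) (A n) \<and>
            (subtopology (Euclidean_space (k n)) (cube (a n) (b n) (k n))) interior_of (A n) = {} \<and>
            continuous_map X (subtopology (Euclidean_space (k n)) (cube (a n) (b n) (k n))) (f n))
       \<longrightarrow> finitely_removable X (\<lambda>n. cube (a n) (b n) (k n)) k N A f)"
  apply (rule iffI)
   apply (intro allI impI)
   apply (rule forward; assumption)
  apply (rule backward; assumption)
  done

end
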